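(* Let $\alpha\in(\frac{2\pi}{3},\pi)$. Then $M_b^\|(n,\alpha)\geq 6n-O(\sqrt{n})$, i.e., there is a constant $c>0$ such that for every positive integer $n$ there exists an $\alpha$-bend multigraph on $n$ vertices with at least $6n-c\sqrt{n}$ edges.
   Context: For $\alpha\in(0,\pi)$, an $\alpha$-bend edge between points $a$ and $c$ is a polyline $(a,b,c)$ with a single bend point $b$ (not on the line $ac$) such that the interior angle of the triangle $abc$ at $b$ equals $\alpha$. An $\alpha$-bend multigraph is a multigraph embedded in the plane (vertices are distinct points; edges pairwise do not cross, meet only at common endpoints, and contain no vertex in their relative interior; parallel edges allowed) in which every edge is an $\alpha$-bend edge. $M_b^\|(n,\alpha)$ is the supremum, over all $n$-element sets $P\subset\mathbb{R}^2$, of the maximum number of edges of an $\alpha$-bend multigraph with vertex set $P$. *)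

theory Defs
  imports "HOL-Analysis.Analysis"
begin

type_synonym point = "real ^ 2"

definition angle_at :: "point \<Rightarrow> point \<Rightarrow> point \<Rightarrow> real" where
  "angle_at a b c = arccos (((a - b) \<bullet> (c - b)) / (norm (a - b) * norm (c - b)))"

text \<open>An edge is a triple (a, b, c): endpoints a, c and bend point b.\<close>
definition bend_edge :: "real \<Rightarrow> point \<times> point \<times> point \<Rightarrow> bool" where
  "bend_edge \<alpha> e = (case e of (a, b, c) \<Rightarrow>
      a \<noteq> c \<and> \<not> collinear {a, b, c} \<and> angle_at a b c = \<alpha>)"

definition polyline :: "point \<times> point \<times> point \<Rightarrow> point set" where
  "polyline e = (case e of (a, b, c) \<Rightarrow> closed_segment a b \<union> closed_segment b c)"

definition endpoints :: "point \<times> point \<times> point \<Rightarrow> point set" where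
  "endpoints e = (case e of (a, b, c) \<Rightarrow> {a, c})"

text \<open>Parallel edges
  are distinct triples with the same endpoints; a triple and its reversal describe
  the same polyline and are excluded by the non-crossing condition.\<close>
definition alpha_bend_multigraph :: "real \<Rightarrow> point set \<Rightarrow> (point \<times> point \<times> point) set \<Rightarrow> bool" where
  "alpha_bend_multigraph \<alpha> P E \<longleftrightarrow>
     finite P \<and> finite E \<and>
     (\<forall>e\<in>E. bend_edge \<alpha> e \<and> endpoints e \<subseteq> P \<and> polyline e \<inter> P \<subseteq> endpoints e) \<and>
     (\<forall>e\<in>E. \<forall>e'\<in>E. e \<noteq> e' \<longrightarrow> polyline e \<inter> polyline e' \<subseteq> endpoints e \<inter> endpoints e')"

end

theory Submission
  imports Defs
begin

definition mk :: "real \<Rightarrow> real \<Rightarrow> point" where "mk x y = vector [x,y]"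

lemma mk_simps[simp]: "mk x y $ 1 = x" "mk x y $ 2 = y"
  by (simp_all add: mk_def)

lemma point_eq_iff: "(p::point) = p' \<longleftrightarrow> p$1 = p'$1 \<and> p$2 = p'$2"
  by (simp add: vec_eq_iff forall_2)

lemma norm_point: "norm (p::point) = sqrt ((p$1)^2 + (p$2)^2)"
  by (simp add: norm_vec_def L2_set_def sum_2)

lemma inner_point: "(p::point) \<bullet> p' = p$1 * p'$1 + p$2 * p'$2"
  by (simp add: inner_vec_def sum_2)

definition Ab :: "point \<Rightarrow> point" where "Ab p = mk (p$1 + p$2/2) (sqrt 3 / 2 * p$2)"

lemma Ab_linear: "linear Ab"
  by (rule linearI) (simp_all add: Ab_def point_eq_iff algebra_simps)

lemma Ab_inj: "inj Ab"
  by (rule injI) (simp add: Ab_def point_eq_iff)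

lemma Ab_diff: "Ab a - Ab b = Ab (a - b)"
  by (simp add: Ab_def point_eq_iff field_simps)

lemma s3: "sqrt 3 * sqrt 3 = (3::real)" "sqrt 3 * (sqrt 3 * x) = (3::real) * x"
  by (simp_all add: mult.assoc[symmetric])

definition cr :: "point \<Rightarrow> point \<Rightarrow> real" where "cr v w = v$1 * w$2 - v$2 * w$1"

lemma not_collinear_cr:
  assumes "cr (a - b) (c - b) \<noteq> 0" shows "\<not> collinear {a, b, c}"
proof
  assume "collinear {a, b, c}"
  then obtain u where u: "\<forall>x\<in>{a,b,c}. \<forall>y\<in>{a,b,c}. \<exists>c. x - y = c *\<^sub>R u"
    unfolding collinear_def by blast
  then obtain c1 c2 where "a - b = c1 *\<^sub>R u" "c - b = c2 *\<^sub>R u" by blast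
  then have "cr (a - b) (c - b) = 0" by (simp add: cr_def algebra_simps)
  with assms show False by simp
qed

lemma cr_Ab: "cr (Ab v) (Ab w) = sqrt 3 / 2 * cr v w"
  by (simp add: cr_def Ab_def field_simps)

definition Qd :: "point \<Rightarrow> point \<Rightarrow> real" where
  "Qd v w = v$1*w$1 + (v$1*w$2 + v$2*w$1)/2 + v$2*w$2"

lemma inner_Ab: "Ab v \<bullet> Ab w = Qd v w"
  by (simp add: inner_point Ab_def Qd_def algebra_simps power2_eq_square s3)

lemma norm_Ab: "norm (Ab v) = sqrt (Qd v v)"
  by (simp add: norm_point Ab_def Qd_def algebra_simps power2_eq_square s3)

lemma angle_Ab: "angle_at (Ab a) (Ab b) (Ab c) =
   arccos (Qd (a - b) (c - b) / (sqrt (Qd (a-b) (a-b)) * sqrt (Qd (c-b) (c-b))))"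
  by (simp add: angle_at_def Ab_diff inner_Ab norm_Ab)

definition std :: "real \<Rightarrow> nat \<Rightarrow> point \<times> point \<times> point" where
  "std q k = (if k = 0 then (mk 0 0, mk (1/2-q) (2*q), mk 1 0)
              else if k = 1 then (mk 0 0, mk (2*q) (1/2-q), mk 0 1)
              else (mk 1 0, mk (1/2-q) (1/2-q), mk 0 1))"

definition inS :: "point \<Rightarrow> bool" where
  "inS p \<longleftrightarrow> p$1 > 0 \<and> p$2 > 0 \<and> p$1 + p$2 < 1"

definition reg :: "nat \<Rightarrow> point \<Rightarrow> bool" where
  "reg k p \<longleftrightarrow> (if k = 0 then p$2 < p$1 \<and> p$1 + 2*p$2 < 1
                  else if k = 1 then p$1 < p$2 \<and> 2*p$1 + p$2 < 1
                  else p$1 + 2*p$2 > 1 \<and> 2*p$1 + p$2 > 1)"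

lemma reg_unique: "reg k p \<Longrightarrow> reg k' p \<Longrightarrow> k < 3 \<Longrightarrow> k' < 3 \<Longrightarrow> k = k'"
  unfolding reg_def by (auto split: if_splits)

lemma uq_bounds:
  fixes q u :: real
  assumes "0 < q" "q < 1/6" "0 \<le> u" "u \<le> 1"
  shows "0 \<le> u*q" "u*q \<le> q" "6*(u*q) \<le> u" "0 < u \<Longrightarrow> 0 < u*q" "0 < u \<Longrightarrow> 6*(u*q) < u"
    "u < 1 \<Longrightarrow> u*q < q" "u < 1 \<Longrightarrow> 6*(q - u*q) < 1 - u"
proof -
  show "u < 1 \<Longrightarrow> u*q < q" using assms by simp
  show "u < 1 \<Longrightarrow> 6*(q - u*q) < 1 - u"
  proof -
    assume "u < 1"
    then have "(1-u)*q < (1-u)*(1/6)" using assms by (intro mult_strict_left_mono) auto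
    then show ?thesis by (simp add: algebra_simps)
  qed
  show "0 \<le> u*q" "u*q \<le> q" using assms by (auto simp: mult_left_le_one_le)
  have "u*q \<le> u*(1/6)" using assms by (intro mult_left_mono) auto
  then show "6*(u*q) \<le> u" by simp
  show "0 < u \<Longrightarrow> 0 < u*q" using assms by simp
  assume "0 < u"
  then have "u*q < u*(1/6)" using assms by (intro mult_strict_left_mono) auto
  then show "6*(u*q) < u" by simp
qed

lemma seg_param:
  fixes a b p :: point
  assumes "p \<in> closed_segment a b"
  obtains u where "0 \<le> u" "u \<le> 1" "p$1 = (1-u)*a$1 + u*b$1" "p$2 = (1-u)*a$2 + u*b$2"
  using assms unfolding in_segment by auto

lemma local_std:
  assumes q: "0 < q" "q < 1/6" and k: "k < 3"
    and p: "p \<in> polyline (std q k)" "p \<notin> endpoints (std q k)"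
  shows "inS p \<and> reg k p"
proof -
  have k3: "k = 0 \<or> k = 1 \<or> k = 2" using k by auto
  from p have pne: "p \<noteq> fst (std q k)" "p \<noteq> snd (snd (std q k))"
    by (auto simp: endpoints_def split: prod.splits)
  from p(1) consider "p \<in> closed_segment (fst (std q k)) (fst (snd (std q k)))"
     | "p \<in> closed_segment (fst (snd (std q k))) (snd (snd (std q k)))"
    by (auto simp: polyline_def split: prod.splits)
  then show ?thesis
  proof cases
    case 1
    then obtain u where u: "0 \<le> u" "u \<le> 1" "p$1 = (1-u)*(fst (std q k))$1 + u*(fst (snd (std q k)))$1"
       "p$2 = (1-u)*(fst (std q k))$2 + u*(fst (snd (std q k)))$2" by (rule seg_param)
    have "u \<noteq> 0" using u pne(1) by (auto simp: point_eq_iff)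
    then have "0 < u" using u by simp
    note b = uq_bounds[OF q u(1,2)]
    have bb: "0 < u*q" "6*(u*q) < u" "u*q \<le> q" using b(2,4,5) \<open>0 < u\<close> by auto
    show ?thesis using k3 u \<open>0 < u\<close> q bb by (auto simp: std_def inS_def reg_def algebra_simps)
  next
    case 2
    then obtain u where u: "0 \<le> u" "u \<le> 1" "p$1 = (1-u)*(fst (snd (std q k)))$1 + u*(snd (snd (std q k)))$1"
       "p$2 = (1-u)*(fst (snd (std q k)))$2 + u*(snd (snd (std q k)))$2" by (rule seg_param)
    have "u \<noteq> 1" using u pne(2) by (auto simp: point_eq_iff)
    then have "u < 1" using u by simp
    note b = uq_bounds[OF q u(1,2)]
    have bb: "0 \<le> u*q" "u*q < q" "6*(q - u*q) < 1 - u" using b(1,6,7) \<open>u < 1\<close> by auto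
    show ?thesis using k3 u \<open>u < 1\<close> q bb by (auto simp: std_def inS_def reg_def algebra_simps)
  qed
qed

type_synonym tri = "nat \<times> nat \<times> bool"

fun phi :: "tri \<Rightarrow> point \<Rightarrow> point" where
  "phi (i, j, T) p = (if T then mk (real i + 1) (real j + 1) - p else mk (real i) (real j) + p)"

fun loc :: "tri \<Rightarrow> point \<Rightarrow> point" where
  "loc (i, j, T) p = (if T then mk (real i + 1) (real j + 1) - p else p - mk (real i) (real j))"

lemma loc_phi[simp]: "loc t (phi t p) = p"
  by (cases t) auto

lemma phi_loc[simp]: "phi t (loc t p) = p"
  by (cases t) auto

lemma phi_inj: "phi t x = phi t y \<longleftrightarrow> x = y"
  by (metis loc_phi)

lemma phi_comb: "phi t ((1 - u) *\<^sub>R a + u *\<^sub>R b) = (1 - u) *\<^sub>R phi t a + u *\<^sub>R phi t b"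
  by (cases t) (auto simp: point_eq_iff algebra_simps)

lemma seg_phi: "x \<in> closed_segment (phi t a) (phi t b) \<longleftrightarrow> loc t x \<in> closed_segment a b"
proof
  assume "x \<in> closed_segment (phi t a) (phi t b)"
  then obtain u where u: "0 \<le> u" "u \<le> 1" "x = (1 - u) *\<^sub>R phi t a + u *\<^sub>R phi t b"
    unfolding in_segment by auto
  then have "loc t x = (1 - u) *\<^sub>R a + u *\<^sub>R b" by (simp flip: phi_comb)
  then show "loc t x \<in> closed_segment a b" using u unfolding in_segment by auto
next
  assume "loc t x \<in> closed_segment a b"
  then obtain u where u: "0 \<le> u" "u \<le> 1" "loc t x = (1 - u) *\<^sub>R a + u *\<^sub>R b"
    unfolding in_segment by auto
  then have "x = (1 - u) *\<^sub>R phi t a + u *\<^sub>R phi t b"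
    by (metis phi_comb phi_loc)
  then show "x \<in> closed_segment (phi t a) (phi t b)" using u unfolding in_segment by auto
qed

definition edgeL :: "real \<Rightarrow> tri \<Rightarrow> nat \<Rightarrow> point \<times> point \<times> point" where
  "edgeL q t k = (case std q k of (a, b, c) \<Rightarrow> (phi t a, phi t b, phi t c))"

lemma polyline_edgeL: "p \<in> polyline (edgeL q t k) \<longleftrightarrow> loc t p \<in> polyline (std q k)"
  by (auto simp: edgeL_def polyline_def seg_phi split: prod.splits)

lemma endpoints_edgeL: "p \<in> endpoints (edgeL q t k) \<longleftrightarrow> loc t p \<in> endpoints (std q k)"
  by (auto simp: edgeL_def endpoints_def split: prod.splits)

lemma inS_loc:
  assumes "inS (loc (i, j, T) p)"
  shows "real i < p$1 \<and> p$1 < real i + 1 \<and> real j < p$2 \<and> p$2 < real j + 1 \<and>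
         (T \<longleftrightarrow> p$1 + p$2 > real i + real j + 1)"
  using assms by (cases T) (auto simp: inS_def)

lemma nat_between: "real i < x \<Longrightarrow> x < real i' + 1 \<Longrightarrow> i \<le> i'"
proof -
  assume "real i < x" "x < real i' + 1"
  then have "real i < real (Suc i')" by simp
  then show ?thesis by (simp only: of_nat_less_iff)
qed

lemma tri_unique:
  assumes "inS (loc t p)" "inS (loc t' p)" shows "t = t'"
proof -
  obtain i j T where t: "t = (i, j, T)" by (cases t) auto
  obtain i' j' T' where t': "t' = (i', j', T')" by (cases t') auto
  note a = inS_loc[OF assms(1)[unfolded t]] inS_loc[OF assms(2)[unfolded t']]
  have "i \<le> i'" "i' \<le> i" "j \<le> j'" "j' \<le> j" using a by (auto intro: nat_between)
  then have ij: "i = i'" "j = j'" by auto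
  have "T = T'" using a unfolding ij by auto
  then show ?thesis using t t' ij by auto
qed

lemma uniq:
  assumes q: "0 < q" "q < 1/6" and k: "k < 3" "k' < 3"
    and p: "p \<in> polyline (edgeL q t k)" "p \<notin> endpoints (edgeL q t k)"
      "p \<in> polyline (edgeL q t' k')" "p \<notin> endpoints (edgeL q t' k')"
  shows "t = t' \<and> k = k'"
proof -
  have A: "inS (loc t p) \<and> reg k (loc t p)"
    using local_std[OF q k(1)] p(1,2) by (simp add: polyline_edgeL endpoints_edgeL)
  have B: "inS (loc t' p) \<and> reg k' (loc t' p)"
    using local_std[OF q k(2)] p(3,4) by (simp add: polyline_edgeL endpoints_edgeL)
  have "t = t'" using A B tri_unique by blast
  then show ?thesis using A B reg_unique k by blast
qed

definition grid :: "nat \<Rightarrow> point set" where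
  "grid m = (\<lambda>(a, b). mk (real a) (real b)) ` ({..<m} \<times> {..<m})"

definition extra :: "nat \<Rightarrow> point set" where
  "extra r = (\<lambda>t. mk (- 1 - real t) 0) ` {..<r}"

lemma inS_not_Q:
  assumes "inS (loc t p)" "p \<in> grid m \<union> extra r" shows False
proof -
  obtain i j T where t: "t = (i, j, T)" by (cases t) auto
  note a = inS_loc[OF assms(1)[unfolded t]]
  from assms(2) show False
  proof
    assume "p \<in> grid m"
    then obtain x y where "p = mk (real x) (real y)" by (auto simp: grid_def)
    then have "real i < real x" "real x < real i + 1" using a by auto
    then have "real i < real x" "real x < real (Suc i)" by auto
    then have "i < x" "x < Suc i" by (simp_all only: of_nat_less_iff)
    then show False by simp
  next
    assume "p \<in> extra r"
    then obtain x where "p = mk (- 1 - real x) 0" by (auto simp: extra_def)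
    then show False using a by auto
  qed
qed

lemma phi_corner:
  "phi (i,j,T) (mk 0 0) = mk (real (if T then Suc i else i)) (real (if T then Suc j else j))"
  "phi (i,j,T) (mk 1 0) = mk (real (if T then i else Suc i)) (real (if T then Suc j else j))"
  "phi (i,j,T) (mk 0 1) = mk (real (if T then Suc i else i)) (real (if T then j else Suc j))"
  by (cases T; simp add: point_eq_iff)+

lemma mk_in_grid: "a < m \<Longrightarrow> b < m \<Longrightarrow> mk (real a) (real b) \<in> grid m"
  unfolding grid_def by force

lemma mk_in_grid':
  "Suc a < m \<Longrightarrow> Suc b < m \<Longrightarrow> mk (1 + real a) (1 + real b) \<in> grid m"
  "a < m \<Longrightarrow> Suc b < m \<Longrightarrow> mk (real a) (1 + real b) \<in> grid m"
  "Suc a < m \<Longrightarrow> b < m \<Longrightarrow> mk (1 + real a) (real b) \<in> grid m"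
  using mk_in_grid[of "Suc a" m "Suc b"] mk_in_grid[of a m "Suc b"] mk_in_grid[of "Suc a" m b] by simp_all

definition Tri :: "nat \<Rightarrow> tri set" where
  "Tri m = {..<m-1} \<times> {..<m-1} \<times> (UNIV :: bool set)"

definition EL :: "real \<Rightarrow> nat \<Rightarrow> (point \<times> point \<times> point) set" where
  "EL q m = (\<lambda>(t, k). edgeL q t k) ` (Tri m \<times> {..<3})"

lemma endpoints_std: "k < 3 \<Longrightarrow> endpoints (std q k) \<subseteq> {mk 0 0, mk 1 0, mk 0 1}"
  by (auto simp: std_def endpoints_def)

lemma endpoints_in_grid:
  assumes "t \<in> Tri m" "k < 3" shows "endpoints (edgeL q t k) \<subseteq> grid m"
proof
  fix p assume "p \<in> endpoints (edgeL q t k)"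
  then have "loc t p \<in> {mk 0 0, mk 1 0, mk 0 1}" using endpoints_std[OF assms(2)]
    by (auto simp: endpoints_edgeL)
  then have "phi t (loc t p) \<in> {phi t (mk 0 0), phi t (mk 1 0), phi t (mk 0 1)}" by (auto simp del: phi_loc phi.simps)
  then have "p \<in> {phi t (mk 0 0), phi t (mk 1 0), phi t (mk 0 1)}" by simp
  moreover obtain i j T where t: "t = (i, j, T)" by (cases t) auto
  moreover have "Suc i < m" "Suc j < m" using assms(1) t by (auto simp: Tri_def)
  ultimately show "p \<in> grid m"
    by (cases T) (auto simp: phi_corner simp del: phi.simps intro!: mk_in_grid mk_in_grid')
qed

lemma bend_in_polyline: "fst (snd e) \<in> polyline e"
  by (auto simp: polyline_def split: prod.splits)

lemma bend_not_endpoint: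
  assumes "0 < q" "q < 1/6" "k < 3"
  shows "fst (snd (edgeL q t k)) \<notin> endpoints (edgeL q t k)"
proof -
  have "fst (snd (edgeL q t k)) = phi t (fst (snd (std q k)))"
    by (simp add: edgeL_def split: prod.splits)
  moreover have "fst (snd (std q k)) \<notin> endpoints (std q k)"
    using assms by (auto simp: std_def endpoints_def point_eq_iff)
  ultimately show ?thesis by (simp add: endpoints_edgeL)
qed

lemma edgeL_inj:
  assumes q: "0 < q" "q < 1/6" shows "inj_on (\<lambda>(t, k). edgeL q t k) (Tri m \<times> {..<3})"
proof (rule inj_onI, clarify)
  fix t k t' k' assume k: "k < 3" "k' < 3" and e: "edgeL q t k = edgeL q t' k'"
  let ?p = "fst (snd (edgeL q t k))"
  show "t = t' \<and> k = k'"
  proof (rule uniq[OF q k])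
    show "?p \<in> polyline (edgeL q t k)" "?p \<notin> endpoints (edgeL q t k)"
      using bend_in_polyline bend_not_endpoint[OF q k(1)] by auto
    then show "?p \<in> polyline (edgeL q t' k')" "?p \<notin> endpoints (edgeL q t' k')"
      using e by auto
  qed
qed

lemma card_Tri: "card (Tri m) = (m - 1) * (m - 1) * 2"
  by (simp add: Tri_def card_cartesian_product)

lemma card_EL: "0 < q \<Longrightarrow> q < 1/6 \<Longrightarrow> card (EL q m) = 6 * (m - 1) * (m - 1)"
  unfolding EL_def by (simp add: card_image edgeL_inj card_cartesian_product card_Tri)

lemma finite_EL: "finite (EL q m)"
  by (simp add: EL_def Tri_def)

lemma lattice_props:
  assumes q: "0 < q" "q < 1/6" and e: "e \<in> EL q m"
  shows "endpoints e \<subseteq> grid m \<union> extra r"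
    and "polyline e \<inter> (grid m \<union> extra r) \<subseteq> endpoints e"
proof -
  obtain t k where tk: "t \<in> Tri m" "k < 3" "e = edgeL q t k" using e by (auto simp: EL_def)
  show "endpoints e \<subseteq> grid m \<union> extra r" using endpoints_in_grid[OF tk(1,2)] tk(3) by auto
  show "polyline e \<inter> (grid m \<union> extra r) \<subseteq> endpoints e"
  proof
    fix p assume p: "p \<in> polyline e \<inter> (grid m \<union> extra r)"
    show "p \<in> endpoints e"
    proof (rule ccontr)
      assume "p \<notin> endpoints e"
      then have "inS (loc t p)" using local_std[OF q tk(2)] p tk(3)
        by (simp add: polyline_edgeL endpoints_edgeL)
      then show False using inS_not_Q p by blast
    qed
  qed
qed

lemma lattice_cross:
  assumes q: "0 < q" "q < 1/6" and e: "e \<in> EL q m" "e' \<in> EL q m" "e \<noteq> e'"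
  shows "polyline e \<inter> polyline e' \<subseteq> endpoints e \<inter> endpoints e'"
proof
  fix p assume p: "p \<in> polyline e \<inter> polyline e'"
  obtain t k where tk: "t \<in> Tri m" "k < 3" "e = edgeL q t k" using e by (auto simp: EL_def)
  obtain t' k' where tk': "t' \<in> Tri m" "k' < 3" "e' = edgeL q t' k'" using e by (auto simp: EL_def)
  note L = lattice_props[OF q e(1), of 0] and L' = lattice_props[OF q e(2), of 0]
  show "p \<in> endpoints e \<inter> endpoints e'"
  proof (cases "p \<in> endpoints e \<or> p \<in> endpoints e'")
    case True
    then have "p \<in> grid m \<union> extra 0" using L(1) L'(1) by auto
    then show ?thesis using p L(2) L'(2) by auto
  next
    case False
    then have "t = t' \<and> k = k'" using uniq[OF q tk(2) tk'(2), of p t t'] p tk(3) tk'(3) by blast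
    then show ?thesis using e(3) tk(3) tk'(3) by auto
  qed
qed

definition mapE :: "point \<times> point \<times> point \<Rightarrow> point \<times> point \<times> point" where
  "mapE e = (case e of (a, b, c) \<Rightarrow> (Ab a, Ab b, Ab c))"

lemma polyline_mapE: "polyline (mapE e) = Ab ` polyline e"
  by (auto simp: mapE_def polyline_def closed_segment_linear_image[OF Ab_linear] image_Un
      split: prod.splits)

lemma endpoints_mapE: "endpoints (mapE e) = Ab ` endpoints e"
  by (auto simp: mapE_def endpoints_def split: prod.splits)

lemma mapE_inj: "inj mapE"
proof (rule injI)
  fix x y assume "mapE x = mapE y"
  then show "x = y" using Ab_inj by (auto simp: mapE_def inj_eq split: prod.splits)
qed

lemma std_vals:
  assumes "0 < q" "q < 1/6" "k < 3" "std q k = (a, b, c)"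
  shows "Qd (a-b) (c-b) = 3*q^2 - 1/4" "Qd (a-b) (a-b) = 1/4 + 3*q^2"
        "Qd (c-b) (c-b) = 1/4 + 3*q^2" "cr (a-b) (c-b) \<noteq> 0" "a \<noteq> c"
proof -
  have k3: "k = 0 \<or> k = 1 \<or> k = 2" using assms by auto
  show "Qd (a-b) (c-b) = 3*q^2 - 1/4" using k3 assms
    unfolding Qd_def by (elim disjE) (auto simp: std_def power2_eq_square field_simps)
  show "Qd (a-b) (a-b) = 1/4 + 3*q^2" using k3 assms
    unfolding Qd_def by (elim disjE) (auto simp: std_def power2_eq_square field_simps)
  show "Qd (c-b) (c-b) = 1/4 + 3*q^2" using k3 assms
    unfolding Qd_def by (elim disjE) (auto simp: std_def power2_eq_square field_simps)
  show "cr (a-b) (c-b) \<noteq> 0" using k3 assms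
    by (auto simp: std_def cr_def power2_eq_square algebra_simps)
  show "a \<noteq> c" using k3 assms
    by (auto simp: std_def point_eq_iff)
qed

lemma phi_diff: "phi t x - phi t y = (if snd (snd t) then -(x - y) else x - y)"
  by (cases t) (auto simp: point_eq_iff)

lemma Qd_neg[simp]: "Qd (-v) (-w) = Qd v w"
  by (simp add: Qd_def)

lemma cr_neg[simp]: "cr (-v) (-w) = cr v w"
  by (simp add: cr_def)

lemma edge_bend:
  assumes q: "0 < q" "q < 1/6" and k: "k < 3"
    and al: "cos \<alpha> = (12*q^2 - 1) / (12*q^2 + 1)" "0 \<le> \<alpha>" "\<alpha> \<le> pi"
  shows "bend_edge \<alpha> (mapE (edgeL q t k))"
proof -
  obtain a b c where s: "std q k = (a, b, c)" by (cases "std q k") auto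
  note V = std_vals[OF q k s]
  have e: "mapE (edgeL q t k) = (Ab (phi t a), Ab (phi t b), Ab (phi t c))"
    by (simp add: edgeL_def mapE_def s)
  have ne: "Ab (phi t a) \<noteq> Ab (phi t c)" using V(5) Ab_inj by (simp add: inj_eq phi_inj)
  have "cr (Ab (phi t a) - Ab (phi t b)) (Ab (phi t c) - Ab (phi t b)) = sqrt 3 / 2 * cr (a - b) (c - b)"
    by (simp add: Ab_diff cr_Ab phi_diff) (simp add: cr_def algebra_simps)
  moreover have "sqrt 3 / 2 * cr (a - b) (c - b) \<noteq> 0" using V(4) by simp
  ultimately have "cr (Ab (phi t a) - Ab (phi t b)) (Ab (phi t c) - Ab (phi t b)) \<noteq> 0"
    by metis
  then have ncol: "\<not> collinear {Ab (phi t a), Ab (phi t b), Ab (phi t c)}"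
    by (rule not_collinear_cr)
  have pos: "0 \<le> 1/4 + 3*q^2" by simp
  have "angle_at (Ab (phi t a)) (Ab (phi t b)) (Ab (phi t c)) =
        arccos ((3*q^2 - 1/4) / (sqrt (1/4 + 3*q^2) * sqrt (1/4 + 3*q^2)))"
    by (simp add: angle_Ab phi_diff V(1-3) del: minus_diff_eq)
  also have "\<dots> = arccos ((3*q^2 - 1/4) / (1/4 + 3*q^2))"
    using pos by (simp del: real_sqrt_mult_self add: real_sqrt_mult_self)
  also have "(3*q^2 - 1/4) / (1/4 + 3*q^2) = cos \<alpha>"
  proof -
    have "0 \<le> q^2" by simp
    then have "1/4 + 3*q^2 \<noteq> 0" "12*q^2 + 1 \<noteq> 0" by linarith+
    then show ?thesis unfolding al(1) by (simp add: field_simps)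
  qed
  also have "arccos (cos \<alpha>) = \<alpha>" using al(2,3) by (rule arccos_cos)
  finally show ?thesis using e ne ncol by (simp add: bend_edge_def)
qed

lemma card_grid: "card (grid m) = m * m"
proof -
  have "inj_on (\<lambda>(a, b). mk (real a) (real b)) ({..<m} \<times> {..<m})"
    by (auto simp: inj_on_def point_eq_iff)
  then show ?thesis by (simp add: grid_def card_image card_cartesian_product)
qed

lemma card_extra: "card (extra r) = r"
proof -
  have "inj_on (\<lambda>t. mk (- 1 - real t) 0) {..<r}"
    by (auto simp: inj_on_def point_eq_iff)
  then show ?thesis by (simp add: extra_def card_image)
qed

lemma finite_Q: "finite (grid m \<union> extra r)"
  by (simp add: grid_def extra_def)

lemma disj_Q: "grid m \<inter> extra r = {}"
  by (auto simp: grid_def extra_def point_eq_iff)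

lemma card_Q: "card (grid m \<union> extra r) = m * m + r"
proof -
  have "finite (grid m)" "finite (extra r)" by (simp_all add: grid_def extra_def)
  then show ?thesis using card_Un_disjoint[of "grid m" "extra r"] disj_Q
    by (simp add: card_grid card_extra)
qed

lemma construction:
  assumes q: "0 < q" "q < 1/6"
    and al: "cos \<alpha> = (12*q^2 - 1) / (12*q^2 + 1)" "0 \<le> \<alpha>" "\<alpha> \<le> pi"
  shows "alpha_bend_multigraph \<alpha> (Ab ` (grid m \<union> extra r)) (mapE ` EL q m)"
  unfolding alpha_bend_multigraph_def
proof (intro conjI ballI impI)
  show "finite (Ab ` (grid m \<union> extra r))" using finite_Q by simp
  show "finite (mapE ` EL q m)" using finite_EL by simp
next
  fix e assume "e \<in> mapE ` EL q m"
  then obtain e0 where e0: "e0 \<in> EL q m" "e = mapE e0" by auto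
  then obtain t k where tk: "t \<in> Tri m" "k < 3" "e0 = edgeL q t k" by (auto simp: EL_def)
  show "bend_edge \<alpha> e" using edge_bend[OF q tk(2) al] e0 tk by simp
  show "endpoints e \<subseteq> Ab ` (grid m \<union> extra r)"
    using lattice_props(1)[OF q e0(1), of r] e0(2) by (auto simp: endpoints_mapE)
  have "polyline e \<inter> Ab ` (grid m \<union> extra r) = Ab ` (polyline e0 \<inter> (grid m \<union> extra r))"
    using e0(2) Ab_inj by (simp add: polyline_mapE image_Int)
  then show "polyline e \<inter> Ab ` (grid m \<union> extra r) \<subseteq> endpoints e"
    using lattice_props(2)[OF q e0(1), of r] e0(2) by (auto simp: endpoints_mapE)
next
  fix e e' assume e: "e \<in> mapE ` EL q m" "e' \<in> mapE ` EL q m" "e \<noteq> e'"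
  then obtain e0 e0' where e0: "e0 \<in> EL q m" "e = mapE e0" "e0' \<in> EL q m" "e' = mapE e0'" by auto
  then have ne: "e0 \<noteq> e0'" using e(3) by auto
  have "polyline e \<inter> polyline e' = Ab ` (polyline e0 \<inter> polyline e0')"
    using e0 Ab_inj by (simp add: polyline_mapE image_Int)
  also have "\<dots> \<subseteq> Ab ` (endpoints e0 \<inter> endpoints e0')"
    using lattice_cross[OF q e0(1) e0(3) ne] by (rule image_mono)
  also have "\<dots> = endpoints e \<inter> endpoints e'"
    using e0 Ab_inj by (simp add: endpoints_mapE image_Int)
  finally show "polyline e \<inter> polyline e' \<subseteq> endpoints e \<inter> endpoints e'" .
qed

lemma card_E: "0 < q \<Longrightarrow> q < 1/6 \<Longrightarrow> card (mapE ` EL q m) = 6 * (m - 1) * (m - 1)"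
  using mapE_inj by (simp add: card_image inj_on_subset card_EL)

lemma final_ineq:
  fixes s :: real and m :: nat
  assumes "real m \<le> s" "s < real m + 1" "0 \<le> s" "1 \<le> m"
  shows "6 * s^2 - 24 * s \<le> 6 * (real m - 1)^2"
proof (cases "s \<le> 2")
  case True
  have "s * (s - 4) \<le> 0" using True assms(3) by (simp add: mult_nonneg_nonpos)
  then have "6 * s^2 - 24 * s \<le> 0" by (simp add: power2_eq_square algebra_simps)
  then show ?thesis by (smt (verit) zero_le_power2)
next
  case False
  then have "0 \<le> s - 2" "s - 2 \<le> real m - 1" using assms by auto
  then have "(s - 2)^2 \<le> (real m - 1)^2" by (simp add: power_mono)
  then show ?thesis by (simp add: power2_eq_square algebra_simps)
qed

theorem proposition12:
  fixes \<alpha> :: real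
  assumes "2 * pi / 3 < \<alpha>" and "\<alpha> < pi"
  shows "\<exists>c::real. c > 0 \<and> (\<forall>n::nat. n \<ge> 1 \<longrightarrow>
           (\<exists>P E. card P = n \<and> alpha_bend_multigraph \<alpha> P E \<and>
                  real (card E) \<ge> 6 * real n - c * sqrt (real n)))"
proof -
  define c where "c = cos \<alpha>"
  have a0: "0 \<le> \<alpha>" "\<alpha> \<le> pi" using assms pi_gt_zero by linarith+
  have "cos \<alpha> < cos (2 * pi / 3)"
    using assms a0 by (subst cos_mono_less_eq) auto
  then have c1: "c < -1/2" by (simp add: c_def cos_120)
  have "cos pi < cos \<alpha>" using assms a0 by (subst cos_mono_less_eq) auto
  then have c2: "-1 < c" by (simp add: c_def)
  define X where "X = (1 + c) / (12 * (1 - c))"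
  have X0: "0 < X" using c1 c2 by (simp add: X_def)
  have X1: "X < 1/36" using c1 c2 by (simp add: X_def field_simps)
  define q where "q = sqrt X"
  have q0: "0 < q" using X0 by (simp add: q_def)
  have qX: "q^2 = X" using X0 by (simp add: q_def)
  have q1: "q < 1/6"
  proof (rule ccontr)
    assume "\<not> q < 1/6"
    then have "(1/6)^2 \<le> q^2" by (intro power_mono) auto
    then show False using X1 qX by (simp add: power2_eq_square)
  qed
  have cq: "cos \<alpha> = (12*q^2 - 1) / (12*q^2 + 1)"
    using c1 c2 unfolding qX X_def c_def[symmetric] by (simp add: field_simps)
  show ?thesis
  proof (intro exI[of _ 24] conjI allI impI)
    fix n :: nat assume n: "1 \<le> n"
    define s where "s = sqrt (real n)"
    define m where "m = nat \<lfloor>s\<rfloor>"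
    have s0: "1 \<le> s" using n by (simp add: s_def)
    have ms: "real m \<le> s" "s < real m + 1" using s0 by (simp_all add: m_def)
    have m1: "1 \<le> m" using s0 by (simp add: m_def le_nat_floor)
    have "real (m * m) \<le> s * s" using ms s0 by (simp add: mult_mono)
    also have "s * s = real n" using s_def by simp
    finally have mn: "m * m \<le> n" by linarith
    define r where "r = n - m * m"
    define P where "P = Ab ` (grid m \<union> extra r)"
    define E where "E = mapE ` EL q m"
    have "card P = n" using mn Ab_inj
      by (simp add: P_def card_image inj_on_subset card_Q r_def)
    moreover have "alpha_bend_multigraph \<alpha> P E"
      unfolding P_def E_def using construction[OF q0 q1 cq a0] .
    moreover have "real (card E) = 6 * (real m - 1)^2"
      using m1 by (simp add: E_def card_E[OF q0 q1] power2_eq_square of_nat_diff)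
    moreover have "6 * real n - 24 * sqrt (real n) \<le> 6 * (real m - 1)^2"
      using final_ineq[OF ms _ m1] s0 by (simp add: s_def)
    ultimately show "\<exists>P E. card P = n \<and> alpha_bend_multigraph \<alpha> P E \<and>
                  real (card E) \<ge> 6 * real n - 24 * sqrt (real n)" by metis
  qed simp
qed

end
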